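(* Let $D$ be $\mathbb{C}$ or the quaternions $\mathbb{H}$, viewed as a real algebra, and let $n \geq 1$. Let \[ f_n : D^n \times D^n \to D^n,\quad ((a_1,\ldots,a_n),(b_1,\ldots,b_n)) \mapsto (a_1 b_1, \ldots, a_n b_n) \] be componentwise multiplication, regarded as an $\mathbb{R}$-bilinear map. Then $Q(f_n) = n q$, where $q = Q(f_1)$ is the subrank of the multiplication map $D\times D\to D$. (In particular, $Q(f_n)=n$ for $D=\mathbb{C}$ and $Q(f_n)=2n$ for $D=\mathbb{H}$.)
   Context: For an $\mathbb{R}$-bilinear map $f : U \times V \to W$ between finite-dimensional real vector spaces, its subrank $Q(f)$ is the largest $r$ such that there exist $\mathbb{R}$-linear maps $\varphi_1 : \mathbb{R}^r \to U$, $\varphi_2 : \mathbb{R}^r \to V$, $\varphi_3 : W \to \mathbb{R}^r$ with $\varphi_3(f(\varphi_1(a), \varphi_2(b))) = (a_1b_1,\ldots,a_rb_r)$ for all $a,b \in \mathbb{R}^r$. $\mathbb{H}$ denotes Hamilton's quaternions with basis $1,i,j,k$ and $i^2=j^2=k^2=-1$, $ij=k$, $jk=i$, $ki=j$. *)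

theory Defs
  imports "HOL-Analysis.Analysis"
begin

datatype quat = Quat (qre: real) (qi: real) (qj: real) (qk: real)

instantiation quat :: real_vector
begin
definition "0 = Quat 0 0 0 0"
definition "x + y = Quat (qre x + qre y) (qi x + qi y) (qj x + qj y) (qk x + qk y)"
definition "- x = Quat (- qre x) (- qi x) (- qj x) (- qk x)"
definition "x - y = Quat (qre x - qre y) (qi x - qi y) (qj x - qj y) (qk x - qk y)"
definition "scaleR c x = Quat (c * qre x) (c * qi x) (c * qj x) (c * qk x)"
instance
  by standard (simp_all add: zero_quat_def plus_quat_def uminus_quat_def minus_quat_def
      scaleR_quat_def algebra_simps)
end

text \<open>Hamilton product: basis 1,i,j,k with i^2=j^2=k^2=-1, ij=k, jk=i, ki=j.\<close>
instantiation quat :: times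
begin
definition "x * y = Quat
   (qre x * qre y - qi x * qi y - qj x * qj y - qk x * qk y)
   (qre x * qi y + qi x * qre y + qj x * qk y - qk x * qj y)
   (qre x * qj y - qi x * qk y + qj x * qre y + qk x * qi y)
   (qre x * qk y + qi x * qj y - qj x * qi y + qk x * qre y)"
instance ..
end

text \<open>A linear map phi1 : R^r -> U is written via the images u_0..u_{r-1} of the standard basis,
  a |-> sum_{j<r} a_j u_j; similarly phi2.  A linear map phi3 : W -> R^r is given by its r
  coordinate functionals l_0..l_{r-1}, each R-linear.  Vectors of R^r are the first r
  coordinates of a :: nat => real.\<close>

definition subrank_witness ::
  "('u::real_vector \<Rightarrow> 'v::real_vector \<Rightarrow> 'w::real_vector) \<Rightarrow> nat \<Rightarrow> bool" where
  "subrank_witness f r \<longleftrightarrow>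
     (\<exists>(u :: nat \<Rightarrow> 'u) (v :: nat \<Rightarrow> 'v) (l :: nat \<Rightarrow> 'w \<Rightarrow> real).
        (\<forall>i<r. linear (l i)) \<and>
        (\<forall>(a :: nat \<Rightarrow> real) (b :: nat \<Rightarrow> real). \<forall>i<r.
            l i (f (\<Sum>j<r. a j *\<^sub>R u j) (\<Sum>j<r. b j *\<^sub>R v j)) = a i * b i))"

definition subrank ::
  "('u::real_vector \<Rightarrow> 'v::real_vector \<Rightarrow> 'w::real_vector) \<Rightarrow> nat" where
  "subrank f = (GREATEST r. subrank_witness f r)"

end

theory Submission
  imports Defs
begin

lemma fd_basis:
  fixes S :: "'v::real_vector set"
  assumes "S \<subseteq> span G" "finite G"
  obtains Bs where "Bs \<subseteq> S" "independent Bs" "S \<subseteq> span Bs" "card Bs = dim S" "finite Bs"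
proof -
  obtain Bs where B: "Bs \<subseteq> S" "independent Bs" "S \<subseteq> span Bs" "card Bs = dim S"
    using basis_exists[of S] by blast
  have "finite Bs"
    using independent_span_bound[OF assms(2) B(2)] B(1) assms(1) by blast
  with B that show ?thesis by blast
qed

lemma fd_dim_mono:
  fixes A :: "'v::real_vector set"
  assumes "A \<subseteq> T" "T \<subseteq> span G" "finite G"
  shows "dim A \<le> dim T"
proof -
  obtain Bt where B: "Bt \<subseteq> T" "independent Bt" "T \<subseteq> span Bt" "card Bt = dim T" "finite Bt"
    using fd_basis[OF assms(2,3)] by blast
  have "A \<subseteq> span Bt" using assms(1) B(3) by blast
  then have "dim A \<le> card Bt" using dim_le_card B(5) by blast
  then show ?thesis using B(4) by simp
qed

lemma fd_functional_kernel:
  fixes S :: "'v::real_vector set" and \<phi> :: "'v \<Rightarrow> real"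
  assumes "subspace S" "S \<subseteq> span G" "finite G" "linear \<phi>"
  shows "dim S \<le> dim (S \<inter> {x. \<phi> x = 0}) + 1"
proof (cases "\<forall>s\<in>S. \<phi> s = 0")
  case True
  then have "S \<inter> {x. \<phi> x = 0} = S" by auto
  then show ?thesis by simp
next
  case False
  then obtain s0 where s0: "s0 \<in> S" "\<phi> s0 \<noteq> 0" by auto
  obtain Bk where B: "Bk \<subseteq> S \<inter> {x. \<phi> x = 0}" "independent Bk" "S \<inter> {x. \<phi> x = 0} \<subseteq> span Bk"
     "card Bk = dim (S \<inter> {x. \<phi> x = 0})" "finite Bk"
    using fd_basis[of "S \<inter> {x. \<phi> x = 0}" G] assms(2,3) by blast
  have "S \<subseteq> span (insert s0 Bk)"
  proof
    fix s assume s: "s \<in> S"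
    define t where "t = s - (\<phi> s / \<phi> s0) *\<^sub>R s0"
    have "t \<in> S" unfolding t_def using s s0(1) assms(1)
      by (simp add: subspace_diff subspace_scale)
    moreover have "\<phi> t = 0" unfolding t_def using s0(2) assms(4)
      by (simp add: linear_diff linear_scale)
    ultimately have "t \<in> span Bk" using B(3) by blast
    then have "t \<in> span (insert s0 Bk)" by (meson span_mono subset_insertI subsetD)
    moreover have "(\<phi> s / \<phi> s0) *\<^sub>R s0 \<in> span (insert s0 Bk)"
      by (simp add: span_base span_scale)
    ultimately have "t + (\<phi> s / \<phi> s0) *\<^sub>R s0 \<in> span (insert s0 Bk)" by (rule span_add)
    then show "s \<in> span (insert s0 Bk)" unfolding t_def by simp
  qed
  then have "dim S \<le> card (insert s0 Bk)" using dim_le_card B(5) by blast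
  also have "\<dots> \<le> card Bk + 1" by (simp add: card_insert_le_m1 B(5) card_insert_if)
  finally show ?thesis using B(4) by simp
qed

lemma indep_span_disjoint:
  fixes Bb :: "'v::real_vector set"
  assumes "independent Bb" "A \<subseteq> Bb" "x \<in> span A" "x \<in> span (Bb - A)"
  shows "x = 0"
proof -
  have r1: "representation Bb x = representation A x"
    by (rule representation_extend[OF assms(1) assms(3) assms(2)])
  have r2: "representation Bb x = representation (Bb - A) x"
    by (rule representation_extend[OF assms(1) assms(4)]) auto
  have iA: "independent A" using assms(1,2) dependent_mono by blast
  have iB: "independent (Bb - A)" using assms(1) dependent_mono by blast
  have z: "representation Bb x = (\<lambda>b. 0)"
  proof
    fix b
    show "representation Bb x b = 0"
    proof (rule ccontr)
      assume ne: "representation Bb x b \<noteq> 0"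
      then have "b \<in> A" using r1 representation_ne_zero by metis
      moreover have "b \<in> Bb - A" using ne r2 representation_ne_zero by metis
      ultimately show False by blast
    qed
  qed
  have xs: "x \<in> span Bb" using assms(3,2) span_mono by blast
  have "(\<Sum>b | representation Bb x b \<noteq> 0. representation Bb x b *\<^sub>R b) = x"
    by (rule sum_nonzero_representation_eq[OF assms(1) xs])
  then show ?thesis using z by simp
qed

lemma fd_indep_card_le:
  fixes X :: "'v::real_vector set"
  assumes "independent X" "X \<subseteq> Y" "Y \<subseteq> span G" "finite G"
  shows "card X \<le> dim Y"
proof -
  obtain Bs where B: "Bs \<subseteq> Y" "independent Bs" "Y \<subseteq> span Bs" "card Bs = dim Y" "finite Bs"
    using fd_basis[OF assms(3,4)] by blast
  have "X \<subseteq> span Bs" using assms(2) B(3) by blast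
  then have "card X \<le> card Bs" using independent_span_bound[OF B(5) assms(1)] by blast
  then show ?thesis using B(4) by simp
qed

lemma fd_complement:
  fixes S T :: "'v::real_vector set"
  assumes "subspace T" "T \<subseteq> S" "S \<subseteq> span G" "finite G"
  obtains N where "N \<subseteq> S" "independent N" "finite N" "card N + dim T = dim S"
    "\<And>x. x \<in> span N \<Longrightarrow> x \<in> T \<Longrightarrow> x = 0" "\<And>s. s \<in> S \<Longrightarrow> \<exists>x\<in>span N. s - x \<in> T"
proof -
  have TG: "T \<subseteq> span G" using assms(2,3) by blast
  obtain Bk where Bk: "Bk \<subseteq> T" "independent Bk" "T \<subseteq> span Bk" "card Bk = dim T" "finite Bk"
    using fd_basis[OF TG assms(4)] by blast
  obtain Bb where Bb: "Bk \<subseteq> Bb" "Bb \<subseteq> S" "independent Bb" "S \<subseteq> span Bb"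
  proof -
    have "Bk \<subseteq> S" using Bk(1) assms(2) by blast
    from maximal_independent_subset_extend[OF this Bk(2)] show ?thesis using that by blast
  qed
  have fBb: "finite Bb" using independent_span_bound[OF assms(4) Bb(3)] Bb(2) assms(3) by blast
  have cBb: "card Bb = dim S" using basis_card_eq_dim[OF Bb(2) Bb(4) Bb(3)] .
  define N where "N = Bb - Bk"
  have "N \<subseteq> S" using Bb(2) N_def by blast
  moreover have "independent N" unfolding N_def using Bb(3) dependent_mono by blast
  moreover have "finite N" unfolding N_def using fBb by simp
  moreover have "card N + dim T = dim S"
    unfolding N_def using card_Diff_subset[OF Bk(5) Bb(1)] card_mono[OF fBb Bb(1)] cBb Bk(4) by simp
  moreover have "\<And>x. x \<in> span N \<Longrightarrow> x \<in> T \<Longrightarrow> x = 0"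
  proof -
    fix x assume x: "x \<in> span N" "x \<in> T"
    then have "x \<in> span Bk" using Bk(3) by blast
    then show "x = 0" using indep_span_disjoint[OF Bb(3) Bb(1)] x(1) N_def by blast
  qed
  moreover have "\<And>s. s \<in> S \<Longrightarrow> \<exists>x\<in>span N. s - x \<in> T"
  proof -
    fix s assume s: "s \<in> S"
    have "Bb = N \<union> Bk" using Bb(1) N_def by blast
    then have "s \<in> span (N \<union> Bk)" using s Bb(4) by blast
    then obtain x y where xy: "s = x + y" "x \<in> span N" "y \<in> span Bk" unfolding span_Un by blast
    have "span Bk \<subseteq> T" using span_minimal[OF Bk(1) assms(1)] .
    have "s - x = y" using xy(1) by simp
    then have "s - x \<in> T" using xy(3) \<open>span Bk \<subseteq> T\<close> by blast
    then show "\<exists>x\<in>span N. s - x \<in> T" using xy(2) by blast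
  qed
  ultimately show ?thesis by (rule that)
qed

lemma fd_rank_nullity:
  fixes M :: "'v::real_vector \<Rightarrow> 'w::real_vector"
  assumes "linear M" "subspace S" "S \<subseteq> span G" "finite G"
  shows "dim S \<le> dim (S \<inter> {x. M x = 0}) + dim (M ` S)"
proof -
  let ?T = "S \<inter> {x. M x = 0}"
  have sT: "subspace ?T"
    using assms(2) linear_subspace_kernel[OF assms(1)] by (rule subspace_inter)
  have TS: "?T \<subseteq> S" by blast
  obtain N where N: "N \<subseteq> S" "independent N" "finite N" "card N + dim ?T = dim S"
    "\<And>x. x \<in> span N \<Longrightarrow> x \<in> ?T \<Longrightarrow> x = 0"
    "\<And>s. s \<in> S \<Longrightarrow> \<exists>x\<in>span N. s - x \<in> ?T"
    using fd_complement[OF sT TS assms(3,4)] by blast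
  have spN: "span N \<subseteq> S" using span_minimal[OF N(1) assms(2)] .
  have inj: "inj_on M (span N)"
  proof (rule inj_onI)
    fix x y assume xy: "x \<in> span N" "y \<in> span N" "M x = M y"
    have "x - y \<in> span N" using xy by (simp add: span_diff)
    moreover have "M (x - y) = 0" using xy(3) assms(1) by (simp add: linear_diff)
    ultimately have "x - y = 0" using N(5) spN by blast
    then show "x = y" by simp
  qed
  have iMN: "independent (M ` N)"
    using linear_independent_injective_image[OF assms(1) N(2) inj] .
  have cMN: "card (M ` N) = card N"
    using card_image inj_on_subset[OF inj span_superset] by blast
  obtain Bb where Bb: "Bb \<subseteq> S" "independent Bb" "S \<subseteq> span Bb" "card Bb = dim S" "finite Bb"
    using fd_basis[OF assms(3,4)] by blast
  have "M ` S \<subseteq> span (M ` Bb)"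
    using Bb(3) linear_span_image[OF assms(1), of Bb] by blast
  then have "card (M ` N) \<le> dim (M ` S)"
    using fd_indep_card_le[OF iMN _ _ finite_imageI[OF Bb(5)]] N(1) by blast
  then show ?thesis using cMN N(4) by simp
qed

lemma selection:
  fixes \<phi> :: "'k \<Rightarrow> 'v::real_vector \<Rightarrow> real" and Jk :: "'k set"
  assumes "finite Y" "independent Y" "\<And>k. k \<in> Jk \<Longrightarrow> linear (\<phi> k)"
    "\<And>x. x \<in> span Y \<Longrightarrow> (\<forall>k\<in>Jk. \<phi> k x = 0) \<Longrightarrow> x = 0"
  shows "\<exists>I0 w. I0 \<subseteq> Jk \<and> finite I0 \<and> card I0 = card Y \<and> (\<forall>i\<in>I0. w i \<in> span Y) \<and>
     (\<forall>i\<in>I0. \<forall>i'\<in>I0. \<phi> i' (w i) = (if i = i' then 1 else 0)) \<and> span Y \<subseteq> span (w ` I0)"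
  using assms(1,2,4)
proof (induction Y rule: finite_induct)
  case empty
  show ?case by (rule exI[of _ "{}"]) auto
next
  case (insert y Y)
  have iY: "independent Y" and yY: "y \<notin> span Y"
    using insert.prems(1) insert.hyps(2) independent_insert[of y Y] by simp_all
  have spYi: "span Y \<subseteq> span (insert y Y)" by (rule span_mono) auto
  have condY: "\<And>x. x \<in> span Y \<Longrightarrow> (\<forall>k\<in>Jk. \<phi> k x = 0) \<Longrightarrow> x = 0"
  proof -
    fix x assume "x \<in> span Y" "\<forall>k\<in>Jk. \<phi> k x = 0"
    then show "x = 0" using insert.prems(2) spYi by blast
  qed
  obtain I1 w1 where IH: "I1 \<subseteq> Jk" "finite I1" "card I1 = card Y" "\<forall>i\<in>I1. w1 i \<in> span Y"
    "\<forall>i\<in>I1. \<forall>i'\<in>I1. \<phi> i' (w1 i) = (if i = i' then 1 else 0)" "span Y \<subseteq> span (w1 ` I1)"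
    using insert.IH[OF iY condY] by blast
  have spYi: "span Y \<subseteq> span (insert y Y)" by (rule span_mono) auto
  define z where "z = y - (\<Sum>i\<in>I1. \<phi> i y *\<^sub>R w1 i)"
  have zI1: "\<phi> i z = 0" if i: "i \<in> I1" for i
  proof -
    have li: "linear (\<phi> i)" using assms(3) IH(1) i by blast
    have "\<phi> i z = \<phi> i y - (\<Sum>i'\<in>I1. \<phi> i' y * \<phi> i (w1 i'))"
      unfolding z_def using li by (simp add: linear_diff linear_sum linear_scale)
    also have "(\<Sum>i'\<in>I1. \<phi> i' y * \<phi> i (w1 i')) = (\<Sum>i'\<in>I1. if i' = i then \<phi> i' y else 0)"
      using IH(5) i by (intro sum.cong) auto
    also have "\<dots> = \<phi> i y" using IH(2) i by (simp add: sum.delta)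
    finally show ?thesis by simp
  qed
  have zsp: "z \<in> span (insert y Y)"
    unfolding z_def using IH(4) spYi
    by (intro span_diff span_sum span_scale) (auto intro: span_base)
  have znY: "z \<notin> span Y"
  proof
    assume "z \<in> span Y"
    moreover have "(\<Sum>i\<in>I1. \<phi> i y *\<^sub>R w1 i) \<in> span Y"
      using IH(4) by (intro span_sum span_scale) auto
    ultimately have "z + (\<Sum>i\<in>I1. \<phi> i y *\<^sub>R w1 i) \<in> span Y" by (rule span_add)
    then show False using yY unfolding z_def by simp
  qed
  then have "z \<noteq> 0" using span_zero by metis
  then obtain k where k: "k \<in> Jk" "\<phi> k z \<noteq> 0" using insert.prems(2) zsp by blast
  have kI1: "k \<notin> I1" using zI1 k(2) by blast
  have lk: "linear (\<phi> k)" using assms(3) k(1) by blast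
  define zh where "zh = (1 / \<phi> k z) *\<^sub>R z"
  have zhk: "\<phi> k zh = 1" unfolding zh_def using lk k(2) by (simp add: linear_scale)
  have zhi: "\<phi> i zh = 0" if "i \<in> I1" for i
  proof -
    have li: "linear (\<phi> i)" using assms(3) IH(1) that by blast
    show ?thesis unfolding zh_def using zI1[OF that] by (simp add: linear_scale[OF li])
  qed
  define w where "w = (\<lambda>i. if i = k then zh else w1 i - \<phi> k (w1 i) *\<^sub>R zh)"
  have zhsp: "zh \<in> span (insert y Y)" unfolding zh_def using zsp by (rule span_scale)
  have wsp: "w i \<in> span (insert y Y)" if "i \<in> insert k I1" for i
  proof (cases "i = k")
    case True
    then show ?thesis unfolding w_def using zhsp by simp
  next
    case False
    then have "i \<in> I1" using that by simp
    then have "w1 i \<in> span (insert y Y)" using IH(4) spYi by blast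
    then have "w1 i - \<phi> k (w1 i) *\<^sub>R zh \<in> span (insert y Y)"
      using zhsp by (simp add: span_diff span_scale)
    then show ?thesis unfolding w_def using False by simp
  qed
  have wdelta: "\<phi> i' (w i) = (if i = i' then 1 else 0)"
    if i: "i \<in> insert k I1" and i': "i' \<in> insert k I1" for i i'
  proof -
    have li': "linear (\<phi> i')" using assms(3) i' k(1) IH(1) by blast
    show ?thesis
    proof (cases "i = k")
      case True
      then have wi: "w i = zh" unfolding w_def by simp
      show ?thesis
      proof (cases "i' = k")
        case True
        then show ?thesis using wi zhk \<open>i = k\<close> by simp
      next
        case False
        then have "i' \<in> I1" using i' by simp
        then show ?thesis using wi zhi \<open>i = k\<close> False by simp
      qed
    next
      case False
      then have iI1: "i \<in> I1" using i by simp
      have wi: "w i = w1 i - \<phi> k (w1 i) *\<^sub>R zh" unfolding w_def using False by simp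
      have e: "\<phi> i' (w i) = \<phi> i' (w1 i) - \<phi> k (w1 i) * \<phi> i' zh"
        unfolding wi by (simp add: linear_diff[OF li'] linear_scale[OF li'])
      show ?thesis
      proof (cases "i' = k")
        case True
        then show ?thesis using e zhk False by simp
      next
        case False
        then have "i' \<in> I1" using i' by simp
        then show ?thesis using e zhi IH(5) iI1 by simp
      qed
    qed
  qed
  have wk: "zh \<in> span (w ` insert k I1)"
  proof -
    have "w k \<in> w ` insert k I1" by simp
    then have "w k \<in> span (w ` insert k I1)" by (rule span_base)
    then show ?thesis unfolding w_def by simp
  qed
  have w1s: "w1 i \<in> span (w ` insert k I1)" if "i \<in> I1" for i
  proof -
    have ik: "i \<noteq> k" using that kI1 by blast
    have "w1 i = w i + \<phi> k (w1 i) *\<^sub>R zh" unfolding w_def using ik by simp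
    moreover have "w i \<in> span (w ` insert k I1)" using that by (intro span_base) simp
    moreover have "\<phi> k (w1 i) *\<^sub>R zh \<in> span (w ` insert k I1)" using wk by (rule span_scale)
    ultimately show ?thesis by (metis span_add)
  qed
  have sp1: "span (w1 ` I1) \<subseteq> span (w ` insert k I1)"
    by (rule span_minimal[OF _ subspace_span]) (use w1s in blast)
  have Ys: "Y \<subseteq> span (w ` insert k I1)" using IH(6) span_superset sp1 by blast
  have "z = \<phi> k z *\<^sub>R zh" unfolding zh_def using k(2) by simp
  then have zs: "z \<in> span (w ` insert k I1)" using span_scale[OF wk, of "\<phi> k z"] by simp
  have "(\<Sum>i\<in>I1. \<phi> i y *\<^sub>R w1 i) \<in> span (w ` insert k I1)"
    by (rule span_sum) (use w1s span_scale in blast)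
  then have "z + (\<Sum>i\<in>I1. \<phi> i y *\<^sub>R w1 i) \<in> span (w ` insert k I1)"
    using zs by (rule span_add[rotated])
  then have ys: "y \<in> span (w ` insert k I1)" unfolding z_def by simp
  have spfin: "span (insert y Y) \<subseteq> span (w ` insert k I1)"
    by (rule span_minimal[OF _ subspace_span]) (use Ys ys in blast)
  have c: "card (insert k I1) = card (insert y Y)" using IH(2,3) kI1 insert.hyps by simp
  show ?case
    apply (rule exI[of _ "insert k I1"], rule exI[of _ w])
    using k(1) IH(1,2) c wsp wdelta spfin by blast
qed

definition vmul :: "('a \<Rightarrow> 'a \<Rightarrow> 'a) \<Rightarrow> 'a^'n \<Rightarrow> 'a^'n \<Rightarrow> 'a^'n" where
  "vmul m a b = (\<chi> i. m (a$i) (b$i))"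

definition proj :: "'n set \<Rightarrow> ('a::zero)^'n \<Rightarrow> 'a^'n" where
  "proj S x = (\<chi> c. if c \<in> S then x$c else 0)"

definition wit :: "('a::real_vector \<Rightarrow> 'a \<Rightarrow> 'a) \<Rightarrow> 'n::finite set \<Rightarrow> nat set \<Rightarrow> (nat \<Rightarrow> 'a^'n)
   \<Rightarrow> (nat \<Rightarrow> 'a^'n) \<Rightarrow> (nat \<Rightarrow> 'a^'n \<Rightarrow> real) \<Rightarrow> bool" where
  "wit m I J u v l \<longleftrightarrow> finite J \<and> (\<forall>i\<in>J. linear (l i)) \<and>
     (\<forall>j\<in>J. \<forall>c. c \<notin> I \<longrightarrow> u j $ c = 0 \<and> v j $ c = 0) \<and>
     (\<forall>i\<in>J. \<forall>j\<in>J. \<forall>k\<in>J. l i (vmul m (u j) (v k)) = (if i = j \<and> j = k then 1 else 0))"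

lemma vmul_nth [simp]: "vmul m a b $ c = m (a$c) (b$c)"
  by (simp add: vmul_def)

lemma proj_nth [simp]: "proj S x $ c = (if c \<in> S then x$c else 0)"
  by (simp add: proj_def)

lemma subspace_DC: "subspace {w::('a::real_vector)^'n. \<forall>c. c \<notin> C \<longrightarrow> w$c = 0}"
  by (auto simp: subspace_def)

lemma subspace_kers:
  assumes "\<forall>i\<in>A. linear (l i)"
  shows "subspace {w. \<forall>i\<in>A. l i w = 0}"
  using assms by (auto simp: subspace_def linear_0 linear_add linear_scale)

lemma linear_axis: "linear (axis c :: 'a::real_vector \<Rightarrow> 'a^'n)"
  by (rule linearI) (auto simp: axis_def vec_eq_iff)

lemma vec_sum_axis: "(x::('a::real_vector)^'n) = (\<Sum>c\<in>UNIV. axis c (x$c))"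
  by (simp add: vec_eq_iff axis_def)

lemma DC_span:
  fixes E :: "'a::real_vector set"
  assumes "\<And>x. x \<in> span E"
  shows "{w::'a^'n. \<forall>c. c \<notin> C \<longrightarrow> w$c = 0} \<subseteq> span ((\<lambda>(c,e). axis c e) ` (C \<times> E))"
proof
  fix w :: "'a^'n" assume w: "w \<in> {w. \<forall>c. c \<notin> C \<longrightarrow> w$c = 0}"
  have eq: "w = (\<Sum>c\<in>C. axis c (w$c))"
    using w by (auto simp: vec_eq_iff axis_def)
  have "axis c (w$c) \<in> span ((\<lambda>(c,e). axis c e) ` (C \<times> E))" if c: "c \<in> C" for c
  proof -
    have "axis c (w$c) \<in> axis c ` span E" using assms by blast
    also have "\<dots> = span (axis c ` E)" using linear_span_image[OF linear_axis] by metis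
    also have "\<dots> \<subseteq> span ((\<lambda>(c,e). axis c e) ` (C \<times> E))"
      by (rule span_mono) (use c in auto)
    finally show ?thesis .
  qed
  then have "(\<Sum>c\<in>C. axis c (w$c)) \<in> span ((\<lambda>(c,e). axis c e) ` (C \<times> E))"
    by (intro span_sum) auto
  then show "w \<in> span ((\<lambda>(c,e). axis c e) ` (C \<times> E))" using eq by simp
qed

lemma sw_delta:
  assumes "subrank_witness f r"
  shows "\<exists>u v (l :: nat \<Rightarrow> _ \<Rightarrow> real). (\<forall>i<r. linear (l i)) \<and>
     (\<forall>i<r. \<forall>j<r. \<forall>k<r. l i (f (u j) (v k)) = (if i = j \<and> j = k then 1 else 0))"
proof -
  obtain u v l where L: "\<forall>i<r. linear (l i)" and H: "\<forall>(a :: nat \<Rightarrow> real) (b :: nat \<Rightarrow> real). \<forall>i<r.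
            l i (f (\<Sum>j<r. a j *\<^sub>R u j) (\<Sum>j<r. b j *\<^sub>R v j)) = a i * b i"
    using assms unfolding subrank_witness_def by blast
  have ind: "(\<Sum>t<r. (if t = j then 1 else 0) *\<^sub>R w t) = w j" if "j < r" for j and w :: "nat \<Rightarrow> 'x::real_vector"
  proof -
    have "(\<Sum>t<r. (if t = j then 1 else 0) *\<^sub>R w t) = (\<Sum>t<r. if t = j then w t else 0)"
      by (intro sum.cong) auto
    also have "\<dots> = w j" using that by simp
    finally show ?thesis .
  qed
  have "\<forall>i<r. \<forall>j<r. \<forall>k<r. l i (f (u j) (v k)) = (if i = j \<and> j = k then 1 else 0)"
  proof (intro allI impI)
    fix i j k assume ijk: "i < r" "j < r" "k < r"
    note h = H[rule_format, where a = "\<lambda>t. if t = j then 1 else 0" and b = "\<lambda>t. if t = k then 1 else 0", OF ijk(1)]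
    then show "l i (f (u j) (v k)) = (if i = j \<and> j = k then 1 else 0)"
      using h ind[OF ijk(2), of u] ind[OF ijk(3), of v] by simp
  qed
  then show ?thesis using L by blast
qed

lemma sw_from_delta:
  fixes l :: "nat \<Rightarrow> 'w::real_vector \<Rightarrow> real"
  assumes bil: "bilinear f" and L: "\<forall>i<r. linear (l i)"
    and D: "\<forall>i<r. \<forall>j<r. \<forall>k<r. l i (f (u j) (v k)) = (if i = j \<and> j = k then 1 else 0)"
  shows "subrank_witness f r"
  unfolding subrank_witness_def
proof (rule exI[of _ u], rule exI[of _ v], rule exI[of _ l], rule conjI)
  show "\<forall>i<r. linear (l i)" using L .
  show "\<forall>a b. \<forall>i<r. l i (f (\<Sum>j<r. a j *\<^sub>R u j) (\<Sum>j<r. b j *\<^sub>R v j)) = a i * b i"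
  proof (intro allI impI)
    fix a b :: "nat \<Rightarrow> real" and i assume i: "i < r"
    have li: "linear (l i)" using L i by blast
    have "f (\<Sum>j<r. a j *\<^sub>R u j) (\<Sum>j<r. b j *\<^sub>R v j)
        = (\<Sum>(j,k)\<in>{..<r}\<times>{..<r}. f (a j *\<^sub>R u j) (b k *\<^sub>R v k))"
      by (rule bilinear_sum[OF bil])
    also have "\<dots> = (\<Sum>p\<in>{..<r}\<times>{..<r}. (a (fst p) * b (snd p)) *\<^sub>R f (u (fst p)) (v (snd p)))"
      by (intro sum.cong refl) (simp add: case_prod_beta bilinear_lmul[OF bil] bilinear_rmul[OF bil])
    finally have e1: "l i (f (\<Sum>j<r. a j *\<^sub>R u j) (\<Sum>j<r. b j *\<^sub>R v j))
        = (\<Sum>p\<in>{..<r}\<times>{..<r}. (a (fst p) * b (snd p)) * l i (f (u (fst p)) (v (snd p))))"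
      by (simp only: linear_sum[OF li] linear_scale[OF li] o_def real_scaleR_def)
    have e2: "(a (fst p) * b (snd p)) * l i (f (u (fst p)) (v (snd p))) = (if p = (i,i) then a i * b i else 0)"
      if p: "p \<in> {..<r}\<times>{..<r}" for p
    proof -
      have "l i (f (u (fst p)) (v (snd p))) = (if i = fst p \<and> fst p = snd p then 1 else 0)"
        using D i p by auto
      then show ?thesis by (cases p) auto
    qed
    have "(\<Sum>p\<in>{..<r}\<times>{..<r}. (a (fst p) * b (snd p)) * l i (f (u (fst p)) (v (snd p))))
        = (\<Sum>p\<in>{..<r}\<times>{..<r}. if p = (i,i) then a i * b i else 0)"
      by (rule sum.cong[OF refl e2])
    also have "\<dots> = a i * b i" using i by simp
    finally show "l i (f (\<Sum>j<r. a j *\<^sub>R u j) (\<Sum>j<r. b j *\<^sub>R v j)) = a i * b i" using e1 by simp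
  qed
qed

locale dalg =
  fixes m :: "'a::real_vector \<Rightarrow> 'a \<Rightarrow> 'a" and E :: "'a set" and q :: nat
  assumes bil: "bilinear m"
    and nozd: "\<And>x y. m x y = 0 \<Longrightarrow> x = 0 \<or> y = 0"
    and finE: "finite E" and spE: "\<And>x. x \<in> span E" and cardE: "card E \<le> 2 * q"
begin

lemma m0l [simp]: "m 0 y = 0" using bilinear_lzero[OF bil] .
lemma m0r [simp]: "m x 0 = 0" using bilinear_rzero[OF bil] .

lemma lin_vmul_r: "linear (vmul m (a :: 'a^'n))"
  by (rule linearI) (simp_all add: vec_eq_iff bilinear_radd[OF bil] bilinear_rmul[OF bil])

lemma lin_vmul_l: "linear (\<lambda>a :: 'a^'n. vmul m a b)"
  by (rule linearI) (simp_all add: vec_eq_iff bilinear_ladd[OF bil] bilinear_lmul[OF bil])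

definition Gall :: "('a^'n) set" where "Gall = (\<lambda>(c,e). axis c e) ` (UNIV \<times> E)"

lemma fin_Gall: "finite (Gall :: ('a^'n) set)"
  unfolding Gall_def using finE by simp

lemma sp_Gall: "(x :: 'a^'n) \<in> span Gall"
  using DC_span[of E UNIV] spE unfolding Gall_def by blast

lemma dim_DC: "dim {w::'a^'n. \<forall>c. c \<notin> C \<longrightarrow> w$c = 0} \<le> 2 * q * card C"
proof -
  have "dim {w::'a^'n. \<forall>c. c \<notin> C \<longrightarrow> w$c = 0} \<le> card ((\<lambda>(c,e). axis c e) ` (C \<times> E) :: ('a^'n) set)"
    by (rule dim_le_card[OF DC_span[OF spE]]) (simp add: finE)
  also have "\<dots> \<le> card (C \<times> E)" by (rule card_image_le) (simp add: finE)
  also have "\<dots> = card C * card E" by (simp add: card_cartesian_product)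
  also have "\<dots> \<le> card C * (2 * q)" using cardE by simp
  finally show ?thesis by (simp add: mult.commute mult.left_commute)
qed

theorem wit_bound:
  fixes I :: "'n::finite set" and J :: "nat set" and u v :: "nat \<Rightarrow> 'a^'n"
    and l :: "nat \<Rightarrow> 'a^'n \<Rightarrow> real"
  assumes "wit m I J u v l"
  shows "card J \<le> q * card I"
  using assms
proof (induction "card I" arbitrary: I J u v l rule: less_induct)
  case less
  have finJ: "finite J" and linl: "\<And>i. i \<in> J \<Longrightarrow> linear (l i)"
    and suppu: "\<And>j c. j \<in> J \<Longrightarrow> c \<notin> I \<Longrightarrow> u j $ c = 0"
    and suppv: "\<And>j c. j \<in> J \<Longrightarrow> c \<notin> I \<Longrightarrow> v j $ c = 0"
    and delta: "\<And>i j k. i \<in> J \<Longrightarrow> j \<in> J \<Longrightarrow> k \<in> J \<Longrightarrow>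
        l i (vmul m (u j) (v k)) = (if i = j \<and> j = k then 1 else 0)"
    using less.prems unfolding wit_def by blast+
  show ?case
  proof (cases "J = {}")
    case True
    then show ?thesis by simp
  next
    case False
    then obtain j0 where j0: "j0 \<in> J" by blast
    define C where "C = {c. u j0 $ c \<noteq> 0}"
    have CI: "C \<subseteq> I" using suppu[OF j0] unfolding C_def by blast
    have "u j0 \<noteq> 0"
    proof
      assume "u j0 = 0"
      then have "vmul m (u j0) (v j0) = 0" by (simp add: vec_eq_iff)
      then have "l j0 (vmul m (u j0) (v j0)) = 0" using linl[OF j0] linear_0 by metis
      then show False using delta[OF j0 j0 j0] by simp
    qed
    then have Cne: "C \<noteq> {}" unfolding C_def by (auto simp: vec_eq_iff)
    define I' where "I' = I - C"
    have finI: "finite I" by simp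
    have cardI: "card I = card I' + card C"
      unfolding I'_def using card_Diff_subset[OF finite_subset[OF CI finI] CI] card_mono[OF finI CI] by simp
    have cardlt: "card I' < card I"
      using cardI Cne finite_subset[OF CI finI] by (simp add: card_gt_0_iff)
    have IH: "card J' \<le> q * card I'" if "wit m I' J' u' v' l'"
      for J' and u' v' :: "nat \<Rightarrow> 'a^'n" and l' :: "nat \<Rightarrow> 'a^'n \<Rightarrow> real"
      using less.hyps[OF cardlt that] .
    define B where "B = span (v ` J)"
    define Coef where "Coef = (\<lambda>k b. l k (vmul m (u k) b))"
    have linC: "linear (Coef k)" if "k \<in> J" for k
      unfolding Coef_def using linear_compose[OF lin_vmul_r linl[OF that]] by (simp add: o_def)
    have key1: "l i (vmul m (u i') b) = (if i = i' then Coef i b else 0)"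
      if b: "b \<in> B" and i: "i \<in> J" and i': "i' \<in> J" for b i i'
    proof -
      let ?g = "\<lambda>b. l i (vmul m (u i') b) - (if i = i' then Coef i b else 0)"
      have lg: "linear ?g"
      proof (cases "i = i'")
        case True
        then show ?thesis
          using linear_compose[OF lin_vmul_r linl[OF i]] linC[OF i]
          by (simp add: o_def linear_compose_sub)
      next
        case False
        then show ?thesis
          using linear_compose[OF lin_vmul_r linl[OF i]] by (simp add: o_def)
      qed
      have "?g x = 0" if "x \<in> v ` J" for x
      proof -
        obtain k where k: "k \<in> J" "x = v k" using \<open>x \<in> v ` J\<close> by blast
        show ?thesis using delta[OF i i' k(1)] delta[OF i i k(1)] k(2) unfolding Coef_def by auto
      qed
      then have "?g b = 0" using linear_eq_0_on_span[OF lg] b unfolding B_def by blast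
      then show ?thesis by simp
    qed
    have key2: "b = (\<Sum>k\<in>J. Coef k b *\<^sub>R v k)" if b: "b \<in> B" for b
    proof -
      let ?g = "\<lambda>b. b - (\<Sum>k\<in>J. Coef k b *\<^sub>R v k)"
      have lg: "linear ?g"
      proof (rule linearI)
        fix x y :: "'a^'n" and c :: real
        show "?g (x + y) = ?g x + ?g y"
          using linC by (simp add: linear_add scaleR_add_left sum.distrib algebra_simps)
        show "?g (c *\<^sub>R x) = c *\<^sub>R ?g x"
          using linC by (simp add: linear_scale scaleR_diff_right scaleR_sum_right algebra_simps)
      qed
      have "?g x = 0" if "x \<in> v ` J" for x
      proof -
        obtain k' where k': "k' \<in> J" "x = v k'" using \<open>x \<in> v ` J\<close> by blast
        have "(\<Sum>k\<in>J. Coef k (v k') *\<^sub>R v k) = (\<Sum>k\<in>J. if k = k' then v k else 0)"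
          using delta k'(1) unfolding Coef_def by (intro sum.cong) auto
        also have "\<dots> = v k'" using k'(1) finJ by simp
        finally show ?thesis using k'(2) by simp
      qed
      then have "?g b = 0" using linear_eq_0_on_span[OF lg] b unfolding B_def by blast
      then show ?thesis by simp
    qed
    have injv: "inj_on v J"
    proof (rule inj_onI)
      fix x y assume "x \<in> J" "y \<in> J" "v x = v y"
      then have "l x (vmul m (u x) (v y)) = 1" using delta[of x x x] by simp
      then show "x = y" using delta[of x x y] \<open>x \<in> J\<close> \<open>y \<in> J\<close> by (auto split: if_splits)
    qed
    have indv: "independent (v ` J)"
    proof (rule independent_if_scalars_zero)
      show "finite (v ` J)" using finJ by simp
      fix g x assume sum0: "(\<Sum>x\<in>v ` J. g x *\<^sub>R x) = 0" and x: "x \<in> v ` J"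
      obtain k0 where k0: "k0 \<in> J" "x = v k0" using x by blast
      have "Coef k0 (\<Sum>x\<in>v ` J. g x *\<^sub>R x) = (\<Sum>y\<in>v ` J. g y * Coef k0 y)"
        using linC[OF k0(1)] by (simp add: linear_sum linear_scale)
      also have "\<dots> = (\<Sum>y\<in>v ` J. if y = v k0 then g y else 0)"
      proof (intro sum.cong refl)
        fix y assume "y \<in> v ` J"
        then obtain k where k: "k \<in> J" "y = v k" by blast
        have "Coef k0 y = (if k0 = k then 1 else 0)" using delta[OF k0(1) k0(1) k(1)] k(2) unfolding Coef_def by simp
        moreover have "(y = v k0) = (k = k0)" using injv k k0 by (auto dest: inj_onD)
        ultimately show "g y * Coef k0 y = (if y = v k0 then g y else 0)" by auto
      qed
      also have "\<dots> = g (v k0)" using k0 finJ by simp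
      finally show "g x = 0" using sum0 k0(2) linC[OF k0(1)] linear_0 by metis
    qed
    have dimB: "dim B = card J"
      unfolding B_def dim_span using dim_eq_card_independent[OF indv] card_image[OF injv] by simp
    have subB: "subspace B" unfolding B_def by simp
    have BI: "B \<subseteq> {w. \<forall>c. c \<notin> I \<longrightarrow> w$c = 0}"
      unfolding B_def by (rule span_minimal[OF _ subspace_DC]) (use suppv in auto)
    define M where "M = vmul m (u j0)"
    have linM: "linear M" unfolding M_def by (rule lin_vmul_r)
    define T5 where "T5 = B \<inter> {b. M b = 0}"
    have subT5: "subspace T5" unfolding T5_def using subB linear_subspace_kernel[OF linM] by (rule subspace_inter)
    have RN: "dim B \<le> dim T5 + dim (M ` B)"
      unfolding T5_def by (rule fd_rank_nullity[OF linM subB _ fin_Gall]) (use sp_Gall in blast)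
    have step5: "dim T5 \<le> q * card I'"
    proof -
      have T5G: "T5 \<subseteq> span Gall" using sp_Gall by blast
      obtain Y where Y: "Y \<subseteq> T5" "independent Y" "T5 \<subseteq> span Y" "card Y = dim T5" "finite Y"
        by (rule fd_basis[OF T5G fin_Gall])
      have spY: "span Y \<subseteq> T5" using span_minimal[OF Y(1) subT5] .
      have inj: "x = 0" if "x \<in> span Y" "\<forall>k\<in>J. Coef k x = 0" for x
      proof -
        have "x \<in> B" using that(1) spY unfolding T5_def by blast
        then have "x = (\<Sum>k\<in>J. Coef k x *\<^sub>R v k)" by (rule key2)
        then show ?thesis using that(2) by simp
      qed
      have sel: "\<exists>I0 w. I0 \<subseteq> J \<and> finite I0 \<and> card I0 = card Y \<and> (\<forall>i\<in>I0. w i \<in> span Y) \<and>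
           (\<forall>i\<in>I0. \<forall>i'\<in>I0. Coef i' (w i) = (if i = i' then 1 else 0)) \<and> span Y \<subseteq> span (w ` I0)"
        by (rule selection[where \<phi> = Coef and Jk = J, OF Y(5) Y(2) linC inj])
      then obtain I0 w where S0: "I0 \<subseteq> J \<and> finite I0 \<and> card I0 = card Y \<and> (\<forall>i\<in>I0. w i \<in> span Y) \<and>
           (\<forall>i\<in>I0. \<forall>i'\<in>I0. Coef i' (w i) = (if i = i' then 1 else 0)) \<and> span Y \<subseteq> span (w ` I0)"
        by (elim exE)
      note S = conjunct1[OF S0] conjunct1[OF conjunct2[OF S0]] conjunct1[OF conjunct2[OF conjunct2[OF S0]]]
        conjunct1[OF conjunct2[OF conjunct2[OF conjunct2[OF S0]]]]
        conjunct1[OF conjunct2[OF conjunct2[OF conjunct2[OF conjunct2[OF S0]]]]]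
      have wB: "w i \<in> B" and wM: "M (w i) = 0" if "i \<in> I0" for i
        using S(4) that spY unfolding T5_def by blast+
      have wsupp: "w i $ c = 0" if "i \<in> I0" "c \<notin> I'" for i c
      proof (cases "c \<in> I")
        case False
        then show ?thesis using BI wB[OF that(1)] by blast
      next
        case True
        then have "c \<in> C" using that(2) unfolding I'_def by blast
        then have "u j0 $ c \<noteq> 0" unfolding C_def by simp
        moreover have "m (u j0 $ c) (w i $ c) = 0" using wM[OF that(1)] unfolding M_def
          by (metis vec_lambda_beta vmul_def zero_index)
        ultimately show ?thesis using nozd by blast
      qed
      have "wit m I' I0 (\<lambda>i. proj I' (u i)) w l"
        unfolding wit_def
      proof (intro conjI ballI allI impI)
        show "finite I0" using S(2) .
        show "linear (l i)" if "i \<in> I0" for i using linl S(1) that by blast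
        show "proj I' (u j) $ c = 0" if "j \<in> I0" "c \<notin> I'" for j c using that by simp
        show "w j $ c = 0" if "j \<in> I0" "c \<notin> I'" for j c using wsupp that by blast
        fix i j k assume i: "i \<in> I0" and j: "j \<in> I0" and k: "k \<in> I0"
        have "vmul m (proj I' (u j)) (w k) = vmul m (u j) (w k)"
          using wsupp[OF k] by (auto simp: vec_eq_iff)
        moreover have iJ: "i \<in> J" "j \<in> J" using S(1) i j by blast+
        ultimately have "l i (vmul m (proj I' (u j)) (w k)) = (if i = j then Coef i (w k) else 0)"
          using key1[OF wB[OF k] iJ] by simp
        then show "l i (vmul m (proj I' (u j)) (w k)) = (if i = j \<and> j = k then 1 else 0)"
          using S(5) i k by auto
      qed
      then have "card I0 \<le> q * card I'" by (rule IH)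
      then show ?thesis using S(3) Y(4) by simp
    qed
    define V0 where "V0 = {w::'a^'n. \<forall>c. c \<notin> C \<longrightarrow> w$c = 0}"
    have subV0: "subspace V0" unfolding V0_def by (rule subspace_DC)
    define K0 where "K0 = V0 \<inter> {w. \<forall>i\<in>J. l i w = 0}"
    have subK0: "subspace K0" unfolding K0_def
      using subV0 subspace_kers[of J l] linl by (intro subspace_inter) auto
    have K0V0: "K0 \<subseteq> V0" unfolding K0_def by blast
    have V0G: "V0 \<subseteq> span Gall" using sp_Gall by blast
    obtain N where N: "N \<subseteq> V0" "independent N" "finite N" "card N + dim K0 = dim V0"
      "\<And>x. x \<in> span N \<Longrightarrow> x \<in> K0 \<Longrightarrow> x = 0" "\<And>s. s \<in> V0 \<Longrightarrow> \<exists>x\<in>span N. s - x \<in> K0"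
      using fd_complement[OF subK0 K0V0 V0G fin_Gall] by blast
    have spN: "span N \<subseteq> V0" using span_minimal[OF N(1) subV0] .
    have injN: "x = 0" if "x \<in> span N" "\<forall>k\<in>J. l k x = 0" for x
      using N(5) that spN unfolding K0_def by blast
    have sel6: "\<exists>I1 w. I1 \<subseteq> J \<and> finite I1 \<and> card I1 = card N \<and> (\<forall>i\<in>I1. w i \<in> span N) \<and>
           (\<forall>i\<in>I1. \<forall>i'\<in>I1. l i' (w i) = (if i = i' then 1 else 0)) \<and> span N \<subseteq> span (w ` I1)"
      by (rule selection[where \<phi> = l and Jk = J, OF N(3) N(2) linl injN])
    then obtain I1 w where S6: "I1 \<subseteq> J \<and> finite I1 \<and> card I1 = card N \<and> (\<forall>i\<in>I1. w i \<in> span N) \<and>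
           (\<forall>i\<in>I1. \<forall>i'\<in>I1. l i' (w i) = (if i = i' then 1 else 0)) \<and> span N \<subseteq> span (w ` I1)"
      by (elim exE)
    have I1J: "I1 \<subseteq> J" and finI1: "finite I1" and cI1: "card I1 = card N"
      and wdel: "\<forall>i\<in>I1. \<forall>i'\<in>I1. l i' (w i) = (if i = i' then 1 else 0)"
      and spNw: "span N \<subseteq> span (w ` I1)"
      using S6 by auto
    define I0 where "I0 = J - I1"
    have cI0: "card I0 = card J - card N"
      unfolding I0_def using card_Diff_subset[OF finI1 I1J] cI1 by simp
    have cNJ: "card N \<le> card J" using card_mono[OF finJ I1J] cI1 by simp
    define l' where "l' = (\<lambda>i x. l i x - (\<Sum>i1\<in>I1. l i (w i1) * l i1 x))"
    have linl': "linear (l' i)" if "i \<in> J" for i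
    proof -
      have li: "linear (l i)" using linl[OF that] .
      have lI1: "\<And>i1. i1 \<in> I1 \<Longrightarrow> linear (l i1)" using linl I1J by blast
      show ?thesis unfolding l'_def
      proof (rule linearI)
        fix x y :: "'a^'n" and c :: real
        show "l i (x + y) - (\<Sum>i1\<in>I1. l i (w i1) * l i1 (x + y)) =
          l i x - (\<Sum>i1\<in>I1. l i (w i1) * l i1 x) + (l i y - (\<Sum>i1\<in>I1. l i (w i1) * l i1 y))"
          using li lI1 by (simp add: linear_add distrib_left sum.distrib)
        show "l i (c *\<^sub>R x) - (\<Sum>i1\<in>I1. l i (w i1) * l i1 (c *\<^sub>R x)) =
          c *\<^sub>R (l i x - (\<Sum>i1\<in>I1. l i (w i1) * l i1 x))"
          using li lI1 by (simp add: linear_scale sum_distrib_left algebra_simps)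
      qed
    qed
    have vanish: "l' i s = 0" if i: "i \<in> J" and s: "s \<in> V0" for i s
    proof -
      obtain x where x: "x \<in> span N" "s - x \<in> K0" using N(6)[OF s] by blast
      have lI1: "\<And>i1. i1 \<in> I1 \<Longrightarrow> linear (l i1)" using linl I1J by blast
      have xw: "x = (\<Sum>i1\<in>I1. l i1 x *\<^sub>R w i1)"
      proof -
        let ?g = "\<lambda>y. y - (\<Sum>i1\<in>I1. l i1 y *\<^sub>R w i1)"
        have lg: "linear ?g"
        proof (rule linearI)
          fix y z :: "'a^'n" and c :: real
          show "?g (y + z) = ?g y + ?g z"
            using lI1 by (simp add: linear_add scaleR_add_left sum.distrib algebra_simps)
          show "?g (c *\<^sub>R y) = c *\<^sub>R ?g y"
            using lI1 by (simp add: linear_scale scaleR_diff_right scaleR_sum_right algebra_simps)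
        qed
        have "?g y = 0" if yw: "y \<in> w ` I1" for y
        proof -
          obtain k where k: "k \<in> I1" "y = w k" using yw by blast
          have "(\<Sum>i1\<in>I1. l i1 (w k) *\<^sub>R w i1) = (\<Sum>i1\<in>I1. if i1 = k then w i1 else 0)"
            using wdel k(1) by (intro sum.cong) auto
          also have "\<dots> = w k" using k(1) finI1 by simp
          finally show ?thesis using k(2) by simp
        qed
        then have "?g x = 0" using linear_eq_0_on_span[OF lg] x(1) spNw by blast
        then show ?thesis by simp
      qed
      have ls: "l j s = l j x" if "j \<in> J" for j
      proof -
        have "l j (s - x) = 0" using x(2) that unfolding K0_def by blast
        then show ?thesis using linl[OF that] by (simp add: linear_diff)
      qed
      have "l i x = (\<Sum>i1\<in>I1. l i1 x * l i (w i1))"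
        by (subst xw) (simp add: linear_sum[OF linl[OF i]] linear_scale[OF linl[OF i]] o_def)
      then show ?thesis unfolding l'_def using ls[OF i] ls I1J
        by (simp add: mult.commute subset_iff)
    qed
    have "wit m I' I0 (\<lambda>i. proj I' (u i)) (\<lambda>i. proj I' (v i)) l'"
      unfolding wit_def
    proof (intro conjI ballI allI impI)
      show "finite I0" unfolding I0_def using finJ by simp
      show "linear (l' i)" if "i \<in> I0" for i using linl' that unfolding I0_def by blast
      show "proj I' (u j) $ c = 0" if "j \<in> I0" "c \<notin> I'" for j c using that by simp
      show "proj I' (v j) $ c = 0" if "j \<in> I0" "c \<notin> I'" for j c using that by simp
      fix i j k assume i: "i \<in> I0" and j: "j \<in> I0" and k: "k \<in> I0"
      have iJ: "i \<in> J" "j \<in> J" "k \<in> J" and jI1: "j \<notin> I1" using i j k unfolding I0_def by blast+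
      let ?X = "vmul m (u j) (v k)"
      have dec: "vmul m (proj I' (u j)) (proj I' (v k)) = ?X - proj C ?X"
      proof (subst vec_eq_iff, intro allI)
        fix c
        show "vmul m (proj I' (u j)) (proj I' (v k)) $ c = (?X - proj C ?X) $ c"
        proof (cases "c \<in> I")
          case True
          then show ?thesis unfolding I'_def by auto
        next
          case False
          then have "u j $ c = 0" using suppu iJ(2) by blast
          moreover have "c \<notin> C" using False CI by blast
          ultimately show ?thesis using False unfolding I'_def by auto
        qed
      qed
      have pC: "proj C ?X \<in> V0" unfolding V0_def by simp
      have "l' i (vmul m (proj I' (u j)) (proj I' (v k))) = l' i ?X - l' i (proj C ?X)"
        unfolding dec using linl'[OF iJ(1)] by (simp add: linear_diff)
      also have "l' i (proj C ?X) = 0" using vanish[OF iJ(1) pC] .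
      also have "l' i ?X = l i ?X - (\<Sum>i1\<in>I1. l i (w i1) * l i1 ?X)" unfolding l'_def by simp
      also have "(\<Sum>i1\<in>I1. l i (w i1) * l i1 ?X) = 0"
      proof (rule sum.neutral, rule ballI)
        fix i1 assume i1: "i1 \<in> I1"
        then have "i1 \<in> J" "i1 \<noteq> j" using I1J jI1 by blast+
        then show "l i (w i1) * l i1 ?X = 0" using delta[OF \<open>i1 \<in> J\<close> iJ(2) iJ(3)] by simp
      qed
      finally show "l' i (vmul m (proj I' (u j)) (proj I' (v k))) = (if i = j \<and> j = k then 1 else 0)"
        using delta[OF iJ] by simp
    qed
    then have step6: "card J - card N \<le> q * card I'" using IH cI0 by metis
    define S where "S = V0 \<inter> {w. \<forall>i\<in>J - {j0}. l i w = 0}"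
    have subS: "subspace S" unfolding S_def
      using subV0 subspace_kers[of "J - {j0}" l] linl by (intro subspace_inter) auto
    have MBS: "M ` B \<subseteq> S"
    proof
      fix y assume "y \<in> M ` B"
      then obtain b where b: "b \<in> B" "y = M b" by blast
      have "y \<in> V0" unfolding V0_def b(2) M_def C_def by auto
      moreover have "l i y = 0" if "i \<in> J - {j0}" for i
        using key1[OF b(1), of i j0] that j0 b(2) unfolding M_def by auto
      ultimately show "y \<in> S" unfolding S_def by blast
    qed
    have SG: "S \<subseteq> span Gall" using sp_Gall by blast
    have dMB: "dim (M ` B) \<le> dim S" by (rule fd_dim_mono[OF MBS SG fin_Gall])
    have SK: "S \<inter> {x. l j0 x = 0} = K0" unfolding S_def K0_def using j0 by blast
    have dS: "dim S \<le> dim K0 + 1"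
      using fd_functional_kernel[OF subS SG fin_Gall linl[OF j0]] SK by simp
    have dV0: "dim V0 \<le> 2 * q * card C" unfolding V0_def by (rule dim_DC)
    have "2 * card J \<le> 2 * (q * card I') + 2 * (q * card C) + 1"
      using RN dimB step5 dMB dS N(4) step6 cNJ dV0 by linarith
    then have "card J \<le> q * card I' + q * card C" by linarith
    then show ?thesis using cardI by (simp add: distrib_left)
  qed
qed

end

context dalg
begin

lemma bilinear_vmul: "bilinear (vmul m :: 'a^'n \<Rightarrow> 'a^'n \<Rightarrow> 'a^'n)"
  unfolding bilinear_def using lin_vmul_r lin_vmul_l by blast

lemma subrank_vec_le:
  assumes "subrank_witness (vmul m :: 'a^'n \<Rightarrow> 'a^'n \<Rightarrow> 'a^'n) r"
  shows "r \<le> q * CARD('n)"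
proof -
  obtain u v and l :: "nat \<Rightarrow> 'a^'n \<Rightarrow> real" where L: "\<forall>i<r. linear (l i)"
    and D: "\<forall>i<r. \<forall>j<r. \<forall>k<r. l i (vmul m (u j) (v k)) = (if i = j \<and> j = k then 1 else 0)"
    using sw_delta[OF assms] by blast
  have "wit m (UNIV :: 'n set) {..<r} u v l"
    unfolding wit_def using L D by auto
  from wit_bound[OF this] show ?thesis by simp
qed

lemma subrank_scalar_le:
  assumes "subrank_witness m r"
  shows "r \<le> q"
proof -
  obtain u v and l :: "nat \<Rightarrow> 'a \<Rightarrow> real" where L: "\<forall>i<r. linear (l i)"
    and D: "\<forall>i<r. \<forall>j<r. \<forall>k<r. l i (m (u j) (v k)) = (if i = j \<and> j = k then 1 else 0)"
    using sw_delta[OF assms] by blast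
  define U :: "nat \<Rightarrow> 'a^unit" where "U = (\<lambda>j. \<chi> c. u j)"
  define V :: "nat \<Rightarrow> 'a^unit" where "V = (\<lambda>j. \<chi> c. v j)"
  define L' :: "nat \<Rightarrow> 'a^unit \<Rightarrow> real" where "L' = (\<lambda>i w. l i (w $ ()))"
  have linL': "linear (L' i)" if "i < r" for i
  proof -
    have "linear (\<lambda>w::'a^unit. w $ ())" by (rule linearI) simp_all
    then show ?thesis unfolding L'_def using linear_compose[OF _ spec[OF L, THEN mp, OF that]]
      by (simp add: o_def)
  qed
  have "wit m (UNIV :: unit set) {..<r} U V L'"
    unfolding wit_def U_def V_def L'_def using linL' D by (auto simp: L'_def)
  from wit_bound[OF this] show ?thesis by simp
qed

end

lemma vmul_times: "(\<lambda>(a::('a::times)^'n) b. \<chi> i. a$i * b$i) = vmul (*)"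
  by (simp add: vmul_def fun_eq_iff)

lemma subrank_eqI:
  assumes "subrank_witness f n" "\<And>r. subrank_witness f r \<Longrightarrow> r \<le> n"
  shows "subrank f = n"
  unfolding subrank_def by (rule Greatest_equality) (use assms in auto)

interpretation Cx: dalg "(*) :: complex \<Rightarrow> complex \<Rightarrow> complex" "{1, \<i>}" 1
proof
  show "bilinear ((*) :: complex \<Rightarrow> complex \<Rightarrow> complex)" using bilinear_times by blast
  show "\<And>x y :: complex. x * y = 0 \<Longrightarrow> x = 0 \<or> y = 0" by simp
  show "finite {1, \<i>}" by simp
  show "card {1, \<i>} \<le> 2 * 1" by (simp add: card_insert_if)
  fix x :: complex
  have "x = Re x *\<^sub>R 1 + Im x *\<^sub>R \<i>" by (simp add: complex_eq_iff)
  moreover have "Re x *\<^sub>R 1 + Im x *\<^sub>R \<i> \<in> span {1, \<i>}"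
    by (intro span_add span_scale span_base) auto
  ultimately show "x \<in> span {1, \<i>}" by simp
qed

lemma linear_Re_nth: "linear (\<lambda>w::complex^'n. Re (w $ c))"
  by (rule linearI) simp_all

lemma complex_vec_witness: "subrank_witness (vmul (*) :: complex^'n \<Rightarrow> _ \<Rightarrow> _) CARD('n)"
proof -
  obtain g where g: "bij_betw g {0..<CARD('n)} (UNIV :: 'n set)"
    using ex_bij_betw_nat_finite[of "UNIV :: 'n set"] by auto
  have ginj: "g i = g j \<longleftrightarrow> i = j" if "i < CARD('n)" "j < CARD('n)" for i j
    using g that unfolding bij_betw_def inj_on_def by auto
  define u :: "nat \<Rightarrow> complex^'n" where "u = (\<lambda>k. axis (g k) 1)"
  define l :: "nat \<Rightarrow> complex^'n \<Rightarrow> real" where "l = (\<lambda>k w. Re (w $ g k))"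
  show ?thesis
  proof (rule sw_from_delta[of _ _ l u u])
    show "bilinear (vmul (*) :: complex^'n \<Rightarrow> _ \<Rightarrow> _)" by (rule Cx.bilinear_vmul)
    show "\<forall>i<CARD('n). linear (l i)" unfolding l_def using linear_Re_nth by blast
    show "\<forall>i<CARD('n). \<forall>j<CARD('n). \<forall>k<CARD('n). l i (vmul (*) (u j) (u k)) = (if i = j \<and> j = k then 1 else 0)"
      unfolding l_def u_def by (auto simp: axis_def ginj)
  qed
qed

lemma complex_scalar_witness: "subrank_witness ((*) :: complex \<Rightarrow> _ \<Rightarrow> _) 1"
proof (rule sw_from_delta[of _ _ "\<lambda>i w. Re w" "\<lambda>j. 1" "\<lambda>j. 1"])
  show "bilinear ((*) :: complex \<Rightarrow> _ \<Rightarrow> _)" using bilinear_times by blast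
  show "\<forall>i<1. linear (\<lambda>w::complex. Re w)" by (auto intro!: linearI)
  show "\<forall>i::nat<1. \<forall>j::nat<1. \<forall>k::nat<1. Re ((1::complex) * 1) = (if i = j \<and> j = k then 1 else 0)" by (auto simp: less_Suc_eq)
qed

lemma subrank_complex: "subrank ((*) :: complex \<Rightarrow> _ \<Rightarrow> _) = 1"
  by (rule subrank_eqI[OF complex_scalar_witness]) (use Cx.subrank_scalar_le in simp)

lemma subrank_complex_vec: "subrank (vmul (*) :: complex^'n \<Rightarrow> _ \<Rightarrow> _) = CARD('n)"
  by (rule subrank_eqI[OF complex_vec_witness]) (use Cx.subrank_vec_le in simp)

lemma bilinear_vmul_gen:
  assumes "bilinear m"
  shows "bilinear (vmul m :: ('a::real_vector)^'n \<Rightarrow> _ \<Rightarrow> _)"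
  unfolding bilinear_def
proof (intro conjI allI)
  fix a :: "'a^'n"
  show "linear (vmul m a)"
    by (rule linearI) (simp_all add: vec_eq_iff bilinear_radd[OF assms] bilinear_rmul[OF assms])
  show "linear (\<lambda>x. vmul m x a)"
    by (rule linearI) (simp_all add: vec_eq_iff bilinear_ladd[OF assms] bilinear_lmul[OF assms])
qed

lemma vec_witness:
  fixes m :: "'a::real_vector \<Rightarrow> 'a \<Rightarrow> 'a" and l0 :: "nat \<Rightarrow> 'a \<Rightarrow> real"
  assumes bil: "bilinear m" and s: "0 < s" and L: "\<forall>i<s. linear (l0 i)"
    and D: "\<forall>i<s. \<forall>j<s. \<forall>k<s. l0 i (m (u0 j) (v0 k)) = (if i = j \<and> j = k then 1 else 0)"
  shows "subrank_witness (vmul m :: 'a^'n \<Rightarrow> _ \<Rightarrow> _) (s * CARD('n))"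
proof -
  obtain g where g: "bij_betw g {0..<CARD('n)} (UNIV :: 'n set)"
    using ex_bij_betw_nat_finite[of "UNIV :: 'n set"] by auto
  have ginj: "g i = g j \<longleftrightarrow> i = j" if "i < CARD('n)" "j < CARD('n)" for i j
    using g that unfolding bij_betw_def inj_on_def by auto
  have dlt: "x div s < CARD('n)" if "x < s * CARD('n)" for x
    using that s by (simp add: less_mult_imp_div_less mult.commute)
  have mlt: "x mod s < s" for x using s by simp
  define u :: "nat \<Rightarrow> 'a^'n" where "u = (\<lambda>k. axis (g (k div s)) (u0 (k mod s)))"
  define v :: "nat \<Rightarrow> 'a^'n" where "v = (\<lambda>k. axis (g (k div s)) (v0 (k mod s)))"
  define l :: "nat \<Rightarrow> 'a^'n \<Rightarrow> real" where "l = (\<lambda>k w. l0 (k mod s) (w $ g (k div s)))"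
  have m0l: "m 0 y = 0" for y using bilinear_lzero[OF bil] .
  have m0r: "m x 0 = 0" for x using bilinear_rzero[OF bil] .
  show ?thesis
  proof (rule sw_from_delta[of _ _ l u v])
    show "bilinear (vmul m :: 'a^'n \<Rightarrow> _ \<Rightarrow> _)" by (rule bilinear_vmul_gen[OF bil])
    show "\<forall>i<s * CARD('n). linear (l i)"
    proof (intro allI impI)
      fix i assume "i < s * CARD('n)"
      have l0i: "linear (l0 (i mod s))" using L mlt by blast
      have "linear (\<lambda>w::'a^'n. w $ g (i div s))" by (rule linearI) simp_all
      then show "linear (l i)" unfolding l_def using linear_compose[OF _ l0i] by (simp add: o_def)
    qed
    show "\<forall>i<s * CARD('n). \<forall>j<s * CARD('n). \<forall>k<s * CARD('n).
        l i (vmul m (u j) (v k)) = (if i = j \<and> j = k then 1 else 0)"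
    proof (intro allI impI)
      fix i j k assume i: "i < s * CARD('n)" and j: "j < s * CARD('n)" and k: "k < s * CARD('n)"
      have l00: "l0 (i mod s) 0 = 0" using L mlt linear_0 by blast
      have e: "l i (vmul m (u j) (v k)) =
        l0 (i mod s) (m (if i div s = j div s then u0 (j mod s) else 0) (if i div s = k div s then v0 (k mod s) else 0))"
        unfolding l_def u_def v_def using ginj[OF dlt[OF i] dlt[OF j]] ginj[OF dlt[OF i] dlt[OF k]]
        by (simp add: axis_def)
      show "l i (vmul m (u j) (v k)) = (if i = j \<and> j = k then 1 else 0)"
      proof (cases "i div s = j div s \<and> i div s = k div s")
        case True
        have "i = j \<longleftrightarrow> i mod s = j mod s" using True by (metis div_mult_mod_eq)
        moreover have "j = k \<longleftrightarrow> j mod s = k mod s" using True by (metis div_mult_mod_eq)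
        ultimately show ?thesis using e True D mlt by auto
      next
        case False
        then have "\<not> (i = j \<and> j = k)" by auto
        then show ?thesis using e False l00 m0l m0r by auto
      qed
    qed
  qed
qed

lemma quat_eq: "(x::quat) = Quat (qre x) (qi x) (qj x) (qk x)" by (cases x) simp

lemma bilinear_quat: "bilinear ((*) :: quat \<Rightarrow> quat \<Rightarrow> quat)"
  unfolding bilinear_def
proof (intro conjI allI)
  fix x :: quat
  show "linear ((*) x)"
    by (rule linearI) (simp_all add: times_quat_def plus_quat_def scaleR_quat_def algebra_simps)
  show "linear (\<lambda>y. y * x)"
    by (rule linearI) (simp_all add: times_quat_def plus_quat_def scaleR_quat_def algebra_simps)
qed

lemma quat_norm_mult:
  "(qre (x*y))\<^sup>2 + (qi (x*y))\<^sup>2 + (qj (x*y))\<^sup>2 + (qk (x*y))\<^sup>2 =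
   ((qre x)\<^sup>2 + (qi x)\<^sup>2 + (qj x)\<^sup>2 + (qk x)\<^sup>2) * ((qre y)\<^sup>2 + (qi y)\<^sup>2 + (qj y)\<^sup>2 + (qk y)\<^sup>2)"
  unfolding times_quat_def by simp algebra

lemma quat_nozd:
  assumes "(x::quat) * y = 0" shows "x = 0 \<or> y = 0"
proof -
  have "(qre (x*y))\<^sup>2 + (qi (x*y))\<^sup>2 + (qj (x*y))\<^sup>2 + (qk (x*y))\<^sup>2 = 0"
    using assms by (simp add: zero_quat_def)
  then have "((qre x)\<^sup>2 + (qi x)\<^sup>2 + (qj x)\<^sup>2 + (qk x)\<^sup>2) = 0 \<or> ((qre y)\<^sup>2 + (qi y)\<^sup>2 + (qj y)\<^sup>2 + (qk y)\<^sup>2) = 0"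
    unfolding quat_norm_mult by simp
  moreover have "x = 0" if "(qre x)\<^sup>2 + (qi x)\<^sup>2 + (qj x)\<^sup>2 + (qk x)\<^sup>2 = 0" for x :: quat
  proof -
    have nn: "(qre x)\<^sup>2 \<ge> 0" "(qi x)\<^sup>2 \<ge> 0" "(qj x)\<^sup>2 \<ge> 0" "(qk x)\<^sup>2 \<ge> 0" by simp_all
    have "(qre x)\<^sup>2 = 0" "(qi x)\<^sup>2 = 0" "(qj x)\<^sup>2 = 0" "(qk x)\<^sup>2 = 0"
      using that nn by linarith+
    then have "qre x = 0" "qi x = 0" "qj x = 0" "qk x = 0" by simp_all
    then show ?thesis by (subst quat_eq) (simp add: zero_quat_def)
  qed
  ultimately show ?thesis by blast
qed

interpretation Hq: dalg "(*) :: quat \<Rightarrow> quat \<Rightarrow> quat"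
  "{Quat 1 0 0 0, Quat 0 1 0 0, Quat 0 0 1 0, Quat 0 0 0 1}" 2
proof
  show "bilinear ((*) :: quat \<Rightarrow> quat \<Rightarrow> quat)" by (rule bilinear_quat)
  show "\<And>x y :: quat. x * y = 0 \<Longrightarrow> x = 0 \<or> y = 0" by (rule quat_nozd)
  show "finite {Quat 1 0 0 0, Quat 0 1 0 0, Quat 0 0 1 0, Quat 0 0 0 1}" by simp
  show "card {Quat 1 0 0 0, Quat 0 1 0 0, Quat 0 0 1 0, Quat 0 0 0 1} \<le> 2 * 2"
    by (simp add: card_insert_if)
  fix x :: quat
  have "x = qre x *\<^sub>R Quat 1 0 0 0 + qi x *\<^sub>R Quat 0 1 0 0 + qj x *\<^sub>R Quat 0 0 1 0 + qk x *\<^sub>R Quat 0 0 0 1"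
    by (subst quat_eq) (simp add: scaleR_quat_def plus_quat_def)
  moreover have "qre x *\<^sub>R Quat 1 0 0 0 + qi x *\<^sub>R Quat 0 1 0 0 + qj x *\<^sub>R Quat 0 0 1 0 + qk x *\<^sub>R Quat 0 0 0 1
      \<in> span {Quat 1 0 0 0, Quat 0 1 0 0, Quat 0 0 1 0, Quat 0 0 0 1}"
    by (intro span_add span_scale span_base) auto
  ultimately show "x \<in> span {Quat 1 0 0 0, Quat 0 1 0 0, Quat 0 0 1 0, Quat 0 0 0 1}" by simp
qed

definition qu0 :: "nat \<Rightarrow> quat" where "qu0 j = (if j = 0 then Quat 1 0 0 0 else Quat 0 1 0 0)"
definition qv0 :: "nat \<Rightarrow> quat" where "qv0 j = (if j = 0 then Quat 1 0 0 0 else Quat 0 0 1 0)"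
definition ql0 :: "nat \<Rightarrow> quat \<Rightarrow> real" where "ql0 i w = (if i = 0 then qre w else qk w)"

lemma ql0_lin: "\<forall>i<2. linear (ql0 i)"
  unfolding ql0_def by (auto intro!: linearI simp: plus_quat_def scaleR_quat_def)

lemma ql0_delta: "\<forall>i<2. \<forall>j<2. \<forall>k<2. ql0 i (qu0 j * qv0 k) = (if i = j \<and> j = k then 1 else 0)"
proof (intro allI impI)
  fix i j k :: nat assume "i < 2" "j < 2" "k < 2"
  then have "i = 0 \<or> i = 1" "j = 0 \<or> j = 1" "k = 0 \<or> k = 1" by auto
  then show "ql0 i (qu0 j * qv0 k) = (if i = j \<and> j = k then 1 else 0)"
    unfolding ql0_def qu0_def qv0_def by (auto simp: times_quat_def)
qed

lemma quat_scalar_witness: "subrank_witness ((*) :: quat \<Rightarrow> _ \<Rightarrow> _) 2"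
  by (rule sw_from_delta[OF bilinear_quat ql0_lin ql0_delta])

lemma quat_vec_witness: "subrank_witness (vmul (*) :: quat^'n \<Rightarrow> _ \<Rightarrow> _) (2 * CARD('n))"
  by (rule vec_witness[OF bilinear_quat _ ql0_lin ql0_delta]) simp

lemma subrank_quat: "subrank ((*) :: quat \<Rightarrow> _ \<Rightarrow> _) = 2"
  by (rule subrank_eqI[OF quat_scalar_witness]) (use Hq.subrank_scalar_le in simp)

lemma subrank_quat_vec: "subrank (vmul (*) :: quat^'n \<Rightarrow> _ \<Rightarrow> _) = 2 * CARD('n)"
  by (rule subrank_eqI[OF quat_vec_witness], rule Hq.subrank_vec_le)

theorem corollary5p4:
  shows "subrank (\<lambda>(a::complex^'n) (b::complex^'n). \<chi> i. a$i * b$i)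
           = CARD('n) * subrank (\<lambda>(x::complex) (y::complex). x * y)
       \<and> subrank (\<lambda>(a::complex^'n) (b::complex^'n). \<chi> i. a$i * b$i) = CARD('n)
       \<and> subrank (\<lambda>(a::quat^'n) (b::quat^'n). \<chi> i. a$i * b$i)
           = CARD('n) * subrank (\<lambda>(x::quat) (y::quat). x * y)
       \<and> subrank (\<lambda>(a::quat^'n) (b::quat^'n). \<chi> i. a$i * b$i) = 2 * CARD('n)"
proof -
  have c1: "subrank (vmul (*) :: complex^'n \<Rightarrow> _ \<Rightarrow> _) = CARD('n)" by (rule subrank_complex_vec)
  have q1: "subrank (vmul (*) :: quat^'n \<Rightarrow> _ \<Rightarrow> _) = 2 * CARD('n)" by (rule subrank_quat_vec)
  show ?thesis unfolding vmul_times using c1 q1 subrank_complex subrank_quat by simp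
qed

end
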